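(* Let $S\subseteq M_n$ be a noncommutative graph. Then $\alpha(S)\leq\Theta(S)\leq\mathcal{H}(S)\leq\overline{\xi}(S)$.
   Context: All scalars are complex; $M_{n\times m}$ denotes complex $n\times m$ matrices and $M_n=M_{n\times n}$. A noncommutative graph is a linear subspace $S\subseteq M_n$ that contains $I_n$ and is closed under conjugate transpose. The independence number $\alpha(S)$ is the maximum $\ell$ for which there exist nonzero vectors $\ket{\psi_1},\dots,\ket{\psi_\ell}\in\mathbb{C}^n$ with $\bra{\psi_i}A\ket{\psi_j}=0$ for all distinct $i,j\in[\ell]$ and all $A\in S$. With $S\otimes T=\mathrm{span}\{A\otimes B:A\in S,B\in T\}$ and $S^{\otimes k}$ the $k$-fold tensor power, the Shannon capacity is $\Theta(S)=\sup_k\sqrt[k]{\alpha(S^{\otimes k})}$. For a subspace $S\subseteq M_n$, $M_m(S)$ denotes the set of $m\times m$ block matrices $B=[B_{i,j}]_{i,j\in[m]}$ with every block $B_{i,j}\in S$, viewed as elements of $M_{mn}$. The Haemers bound is $\mathcal{H}(S)=\min\{\mathrm{rk}(B):\ m\in\mathbb{N},\ B\in M_m(S),\ \sum_{i=1}^m B_{i,i}=I_n\}$. A quantum channel $\Phi:M_n\to M_k$ is a map $\Phi(A)=\sum_{i=1}^m E_iAE_i^\dagger$ with $E_i\in M_{k\times n}$ and $\sum_i E_i^\dagger E_i=I_n$; its noncommutative graph is $S_\Phi=\mathrm{span}\{E_i^\dagger E_j: i,j\in[m]\}$. The orthogonal rank is $\overline{\xi}(S)=\min\{k:\ \text{there is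 a quantum channel }\Phi:M_n\to M_k \text{ with } S_\Phi\subseteq S\}$. *)

theory Defs
  imports Complex_Main "Jordan_Normal_Form.Schur_Decomposition" "Jordan_Normal_Form.DL_Rank"
begin

definition subspace_mat :: "nat \<Rightarrow> complex mat set \<Rightarrow> bool" where
  "subspace_mat n S \<longleftrightarrow> S \<subseteq> carrier_mat n n \<and> 0\<^sub>m n n \<in> S \<and>
     (\<forall>A\<in>S. \<forall>B\<in>S. A + B \<in> S) \<and> (\<forall>(c::complex) A. A \<in> S \<longrightarrow> c \<cdot>\<^sub>m A \<in> S)"

definition nc_graph :: "nat \<Rightarrow> complex mat set \<Rightarrow> bool" where
  "nc_graph n S \<longleftrightarrow> subspace_mat n S \<and> 1\<^sub>m n \<in> S \<and> (\<forall>A\<in>S. mat_adjoint A \<in> S)"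

definition mat_span :: "nat \<Rightarrow> nat \<Rightarrow> complex mat set \<Rightarrow> complex mat set" where
  "mat_span r c X = {M. \<exists>(m::nat) (coef::nat \<Rightarrow> complex) F. (\<forall>i<m. F i \<in> X) \<and>
      M = mat r c (\<lambda>(a,b). \<Sum>i<m. coef i * (F i $$ (a,b)))}"

definition braket :: "complex vec \<Rightarrow> complex mat \<Rightarrow> complex vec \<Rightarrow> complex" where
  "braket u A v = (A *\<^sub>v v) \<bullet>c u"

definition kron :: "complex mat \<Rightarrow> complex mat \<Rightarrow> complex mat" where
  "kron A B = mat (dim_row A * dim_row B) (dim_col A * dim_col B)
     (\<lambda>(i,j). A $$ (i div dim_row B, j div dim_col B) * B $$ (i mod dim_row B, j mod dim_col B))"

definition tensor_sp :: "nat \<Rightarrow> complex mat set \<Rightarrow> nat \<Rightarrow> complex mat set \<Rightarrow> complex mat set" where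
  "tensor_sp n1 S n2 T = mat_span (n1*n2) (n1*n2) {kron A B | A B. A \<in> S \<and> B \<in> T}"

fun tpow :: "nat \<Rightarrow> complex mat set \<Rightarrow> nat \<Rightarrow> complex mat set" where
  "tpow n S 0 = mat_span 1 1 {1\<^sub>m 1}"
| "tpow n S (Suc k) = tensor_sp (n^k) (tpow n S k) n S"

definition indep_number :: "nat \<Rightarrow> complex mat set \<Rightarrow> nat" where
  "indep_number n S = Sup {l. \<exists>\<psi>::nat \<Rightarrow> complex vec.
      (\<forall>i<l. \<psi> i \<in> carrier_vec n \<and> \<psi> i \<noteq> 0\<^sub>v n) \<and>
      (\<forall>i<l. \<forall>j<l. i \<noteq> j \<longrightarrow> (\<forall>A\<in>S. braket (\<psi> i) A (\<psi> j) = 0))}"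

definition shannon_capacity :: "nat \<Rightarrow> complex mat set \<Rightarrow> real" where
  "shannon_capacity n S = (SUP k\<in>{1..}. root k (real (indep_number (n^k) (tpow n S k))))"

definition block_mat :: "nat \<Rightarrow> nat \<Rightarrow> (nat \<Rightarrow> nat \<Rightarrow> complex mat) \<Rightarrow> complex mat" where
  "block_mat m n F = mat (m*n) (m*n) (\<lambda>(r,c). F (r div n) (c div n) $$ (r mod n, c mod n))"

definition mat_rank :: "complex mat \<Rightarrow> nat" where
  "mat_rank A = vec_space.rank (dim_row A) A"

definition haemers :: "nat \<Rightarrow> complex mat set \<Rightarrow> nat" where
  "haemers n S = Inf {mat_rank (block_mat m n F) | m F.
      (\<forall>i<m. \<forall>j<m. F i j \<in> S) \<and>
      mat n n (\<lambda>(a,b). \<Sum>i<m. F i i $$ (a,b)) = 1\<^sub>m n}"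

text \<open>Kraus operators E_0..E_(m-1) in M_(k x n) of a quantum channel M_n -> M_k.\<close>
definition kraus_channel :: "nat \<Rightarrow> nat \<Rightarrow> nat \<Rightarrow> (nat \<Rightarrow> complex mat) \<Rightarrow> bool" where
  "kraus_channel n k m E \<longleftrightarrow> (\<forall>i<m. E i \<in> carrier_mat k n) \<and>
      mat n n (\<lambda>(a,b). \<Sum>i<m. (mat_adjoint (E i) * E i) $$ (a,b)) = 1\<^sub>m n"

definition channel_graph :: "nat \<Rightarrow> nat \<Rightarrow> (nat \<Rightarrow> complex mat) \<Rightarrow> complex mat set" where
  "channel_graph n m E = mat_span n n {mat_adjoint (E i) * E j | i j. i < m \<and> j < m}"

definition orth_rank :: "nat \<Rightarrow> complex mat set \<Rightarrow> nat" where
  "orth_rank n S = Inf {k. \<exists>m E. kraus_channel n k m E \<and> channel_graph n m E \<subseteq> S}"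

end

theory Submission
  imports Defs
begin


lemma rank_outer_sum:
  fixes f :: "nat \<Rightarrow> nat \<Rightarrow> complex" and g :: "nat \<Rightarrow> nat \<Rightarrow> complex"
  shows "vec_space.rank a (mat a b (\<lambda>(i,j). \<Sum>u<r. f i u * g u j)) \<le> r"
proof (induction r)
  case 0
  have "mat a b (\<lambda>(i,j). \<Sum>u<0. f i u * g u j) = 0\<^sub>m a b" by (rule eq_matI) auto
  then show ?case using vec_space.rank_0I by (metis le_refl)
next
  case (Suc r)
  have e: "mat a b (\<lambda>(i,j). \<Sum>u<Suc r. f i u * g u j) =
     mat a b (\<lambda>(i,j). \<Sum>u<r. f i u * g u j) + mat a b (\<lambda>(i,j). f i r * g r j)"
    by (rule eq_matI) auto
  have "vec_space.rank a (mat a b (\<lambda>(i,j). f i r * g r j)) \<le> 1"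
    by (rule vec_space.rank_le_1_product_entries[where f="\<lambda>i. f i r" and g="\<lambda>j. g r j"]) auto
  then show ?case unfolding e
    using vec_space.rank_subadditive[of "mat a b (\<lambda>(i,j). \<Sum>u<r. f i u * g u j)" a b
        "mat a b (\<lambda>(i,j). f i r * g r j)"] Suc by fastforce
qed

lemma rank_decomp:
  fixes A :: "complex mat"
  assumes A: "A \<in> carrier_mat a b"
  shows "\<exists>f g. A = mat a b (\<lambda>(i,j). \<Sum>u<vec_space.rank a A. f i u * g u j)"
proof -
  interpret vec_space "TYPE(complex)" a .
  define W where "W = span (set (cols A))"
  have cs: "set (cols A) \<subseteq> carrier_vec a" using A cols_dim by blast
  have sub: "VectorSpace.subspace class_ring W V" unfolding W_def by (rule span_is_subspace) (use cs in simp)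
  have vsW: "vectorspace class_ring (vs W)" using subspace_is_vs[OF sub] .
  have fd: "vectorspace.fin_dim class_ring (vs W)" unfolding W_def using fin_dim_span_cols[OF A] .
  obtain \<beta> where \<beta>: "finite \<beta>" "vectorspace.basis class_ring (vs W) \<beta>"
    using vectorspace.finite_basis_exists[OF vsW fd] by blast
  have rk: "rank A = card \<beta>" unfolding rank_def W_def[symmetric]
    using vectorspace.dim_basis[OF vsW \<beta>] .
  have smW: "submodule class_ring W V" using sub unfolding VectorSpace.subspace_def by blast
  have bW: "\<beta> \<subseteq> W" using \<beta>(2) unfolding vectorspace.basis_def[OF vsW] by simp
  have spb: "span \<beta> = W"
  proof -
    have "LinearCombinations.module.span class_ring (vs W) \<beta> = W" using \<beta>(2) unfolding vectorspace.basis_def[OF vsW] by simp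
    then show ?thesis using span_li_not_depend(1)[OF bW smW] by simp
  qed
  have Wc: "W \<subseteq> carrier_vec a" using smW unfolding submodule_def by simp
  have bc: "\<beta> \<subseteq> carrier_vec a" using bW Wc by auto
  have "\<forall>j. \<exists>c. j < b \<longrightarrow> lincomb c \<beta> = col A j"
  proof
    fix j
    show "\<exists>c. j < b \<longrightarrow> lincomb c \<beta> = col A j"
    proof (cases "j < b")
      case True
      then have "col A j \<in> set (cols A)" using A by (metis carrier_matD(2) cols_length cols_nth nth_mem)
      then have "col A j \<in> span \<beta>" unfolding spb W_def using in_own_span[OF cs] by auto
      then obtain cc where "lincomb cc \<beta> = col A j" using finite_in_span[OF \<beta>(1) bc] by blast
      then show ?thesis by blast
    qed auto
  qed
  then obtain c where c: "\<And>j. j < b \<Longrightarrow> lincomb (c j) \<beta> = col A j" by metis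
  obtain e where e: "bij_betw e {..<card \<beta>} \<beta>"
    using ex_bij_betw_nat_finite[OF \<beta>(1)] by (auto simp add: atLeast0LessThan)
  show ?thesis unfolding rk
  proof (intro exI)
    show "A = mat a b (\<lambda>(i,j). \<Sum>u<card \<beta>. (e u $ i) * c j (e u))"
    proof (rule eq_matI)
      fix i j assume ij: "i < dim_row (mat a b (\<lambda>(i,j). \<Sum>u<card \<beta>. (e u $ i) * c j (e u)))"
          "j < dim_col (mat a b (\<lambda>(i,j). \<Sum>u<card \<beta>. (e u $ i) * c j (e u)))"
      then have i: "i < a" and j: "j < b" by auto
      have "A $$ (i,j) = col A j $ i" using A i j by auto
      also have "\<dots> = lincomb (c j) \<beta> $ i" using c[OF j] by simp
      also have "\<dots> = (\<Sum>x\<in>\<beta>. c j x * x $ i)" using lincomb_index[OF i bc] .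
      also have "\<dots> = (\<Sum>u<card \<beta>. c j (e u) * e u $ i)"
        using sum.reindex_bij_betw[OF e, of "\<lambda>x. c j x * x $ i"] by simp
      finally show "A $$ (i,j) = mat a b (\<lambda>(i,j). \<Sum>u<card \<beta>. (e u $ i) * c j (e u)) $$ (i,j)"
        using i j by (simp add: mult.commute)
    qed (use A in auto)
  qed
qed


lemma sum_div_mod:
  fixes h :: "nat \<Rightarrow> nat \<Rightarrow> 'a::comm_monoid_add"
  shows "(\<Sum>w<a*b. h (w div b) (w mod b)) = (\<Sum>u<a. \<Sum>v<b. h u v)"
proof (induction a)
  case 0 then show ?case by simp
next
  case (Suc a)
  have "{..<Suc a * b} = {..<a*b} \<union> {a*b..<a*b+b}" by auto
  then have "(\<Sum>w<Suc a*b. h (w div b) (w mod b)) =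
     (\<Sum>w<a*b. h (w div b) (w mod b)) + (\<Sum>w\<in>{a*b..<a*b+b}. h (w div b) (w mod b))"
    by (simp add: sum.union_disjoint ivl_disj_int)
  also have "(\<Sum>w\<in>{a*b..<a*b+b}. h (w div b) (w mod b)) = (\<Sum>v<b. h a v)"
  proof -
    have "(\<Sum>w\<in>{a*b..<a*b+b}. h (w div b) (w mod b)) = (\<Sum>v\<in>{0..<b}. h ((v + a*b) div b) ((v + a*b) mod b))"
      using sum.shift_bounds_nat_ivl[of "\<lambda>w. h (w div b) (w mod b)" 0 "a*b" b] by (simp add: add.commute)
    also have "\<dots> = (\<Sum>v\<in>{0..<b}. h a v)"
      by (rule sum.cong) auto
    finally show ?thesis by (simp add: atLeast0LessThan)
  qed
  finally show ?case using Suc by simp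
qed

lemma span_closed:
  fixes m :: nat
  assumes S: "subspace_mat n S" and G: "\<forall>i<m. G i \<in> S"
  shows "mat n n (\<lambda>(a,b). \<Sum>i<m. c i * G i $$ (a,b)) \<in> S"
  using G
proof (induction m)
  case 0
  have "mat n n (\<lambda>(a,b). \<Sum>i<0. c i * G i $$ (a,b)) = 0\<^sub>m n n" by (rule eq_matI) auto
  then show ?case using S unfolding subspace_mat_def by metis
next
  case (Suc m)
  have Gm: "G m \<in> carrier_mat n n" using Suc.prems S unfolding subspace_mat_def by auto
  have e: "mat n n (\<lambda>(a,b). \<Sum>i<Suc m. c i * G i $$ (a,b)) =
      mat n n (\<lambda>(a,b). \<Sum>i<m. c i * G i $$ (a,b)) + c m \<cdot>\<^sub>m G m"
    by (rule eq_matI) (use Gm in auto)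
  have "mat n n (\<lambda>(a,b). \<Sum>i<m. c i * G i $$ (a,b)) \<in> S" by (rule Suc.IH) (use Suc.prems in simp)
  moreover have "c m \<cdot>\<^sub>m G m \<in> S" using Suc.prems S unfolding subspace_mat_def by auto
  ultimately show ?case unfolding e using S unfolding subspace_mat_def by blast
qed

lemma braket_expand:
  assumes "u \<in> carrier_vec N" "v \<in> carrier_vec N" "A \<in> carrier_mat N N"
  shows "braket u A v = (\<Sum>x<N. \<Sum>y<N. cnj (u $ x) * A $$ (x,y) * v $ y)"
  using assms unfolding braket_def
  by (simp add: scalar_prod_def mult_mat_vec_def sum_distrib_left atLeast0LessThan mult_ac)

lemma triple_swap:
  fixes c :: "nat \<Rightarrow> complex"
  shows "(\<Sum>x<X. \<Sum>y<Y. c x * (\<Sum>w<W. f x w * g w y) * d y) =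
         (\<Sum>w<W. (\<Sum>x<X. c x * f x w) * (\<Sum>y<Y. g w y * d y))"
proof -
  have "(\<Sum>x<X. \<Sum>y<Y. c x * (\<Sum>w<W. f x w * g w y) * d y) = (\<Sum>x<X. \<Sum>y<Y. \<Sum>w<W. c x * f x w * (g w y * d y))"
    by (simp add: sum_distrib_left sum_distrib_right mult.assoc)
  also have "\<dots> = (\<Sum>x<X. \<Sum>w<W. \<Sum>y<Y. c x * f x w * (g w y * d y))"
    by (rule sum.cong[OF refl], rule sum.swap)
  also have "\<dots> = (\<Sum>w<W. \<Sum>x<X. \<Sum>y<Y. c x * f x w * (g w y * d y))"
    by (rule sum.swap)
  also have "\<dots> = (\<Sum>w<W. (\<Sum>x<X. c x * f x w) * (\<Sum>y<Y. g w y * d y))"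
    by (simp add: sum_product)
  finally show ?thesis .
qed

lemma braket_sum:
  assumes u: "u \<in> carrier_vec N" and v: "v \<in> carrier_vec N" and G: "\<forall>i<m. G i \<in> carrier_mat N N"
  shows "braket u (mat N N (\<lambda>(a,b). \<Sum>i<m. G i $$ (a,b))) v = (\<Sum>i<m. braket u (G i) v)"
proof -
  have "braket u (mat N N (\<lambda>(a,b). \<Sum>i<m. G i $$ (a,b))) v =
     (\<Sum>x<N. \<Sum>y<N. \<Sum>i<m. cnj (u $ x) * G i $$ (x,y) * v $ y)"
    by (subst braket_expand[OF u v], simp, simp add: sum_distrib_left sum_distrib_right)
  also have "\<dots> = (\<Sum>x<N. \<Sum>i<m. \<Sum>y<N. cnj (u $ x) * G i $$ (x,y) * v $ y)"
    by (rule sum.cong[OF refl], rule sum.swap)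
  also have "\<dots> = (\<Sum>i<m. \<Sum>x<N. \<Sum>y<N. cnj (u $ x) * G i $$ (x,y) * v $ y)"
    by (rule sum.swap)
  also have "\<dots> = (\<Sum>i<m. braket u (G i) v)"
    using G by (intro sum.cong refl, subst braket_expand[OF u v]) auto
  finally show ?thesis .
qed

lemma idx_bound: "(a::nat) < m \<Longrightarrow> x < N \<Longrightarrow> a * N + x < m * N"
proof -
  assume "a < m" "x < N"
  then have "a * N + x < a * N + N" by simp
  also have "\<dots> = Suc a * N" by simp
  also have "\<dots> \<le> m * N" using \<open>a < m\<close> by (intro mult_le_mono1) simp
  finally show ?thesis .
qed

definition feas :: "nat \<Rightarrow> complex mat set \<Rightarrow> nat \<Rightarrow> (nat \<Rightarrow> nat \<Rightarrow> complex mat) \<Rightarrow> nat \<Rightarrow> bool" where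
  "feas N T m F r \<longleftrightarrow> (\<forall>i<m. \<forall>j<m. F i j \<in> T \<and> F i j \<in> carrier_mat N N) \<and>
     mat N N (\<lambda>(a,b). \<Sum>i<m. F i i $$ (a,b)) = 1\<^sub>m N \<and>
     (\<exists>f g. block_mat m N F = mat (m*N) (m*N) (\<lambda>(i,j). \<Sum>u<r. f i u * g u j))"

definition iset :: "nat \<Rightarrow> complex mat set \<Rightarrow> nat set" where
  "iset N T = {l. \<exists>\<psi>::nat \<Rightarrow> complex vec.
      (\<forall>i<l. \<psi> i \<in> carrier_vec N \<and> \<psi> i \<noteq> 0\<^sub>v N) \<and>
      (\<forall>i<l. \<forall>j<l. i \<noteq> j \<longrightarrow> (\<forall>A\<in>T. braket (\<psi> i) A (\<psi> j) = 0))}"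

lemma indep_iset: "indep_number N T = Sup (iset N T)"
  unfolding indep_number_def iset_def ..

lemma iset_ne: "0 \<in> iset N T" unfolding iset_def by auto

lemma alpha_elem_le:
  assumes fe: "feas N T m F r" and lin: "l \<in> iset N T"
  shows "l \<le> r"
proof -
  from lin obtain \<psi> :: "nat \<Rightarrow> complex vec" where h1: "\<forall>i<l. \<psi> i \<in> carrier_vec N \<and> \<psi> i \<noteq> 0\<^sub>v N"
    and h2: "\<forall>i<l. \<forall>j<l. i \<noteq> j \<longrightarrow> (\<forall>A\<in>T. braket (\<psi> i) A (\<psi> j) = 0)"
    unfolding iset_def by blast
  have \<psi>c: "\<And>i. i < l \<Longrightarrow> \<psi> i \<in> carrier_vec N" using h1 by blast
  have \<psi>0: "\<And>i. i < l \<Longrightarrow> \<psi> i \<noteq> 0\<^sub>v N" using h1 by blast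
  have orth: "\<And>i j A. i < l \<Longrightarrow> j < l \<Longrightarrow> i \<noteq> j \<Longrightarrow> A \<in> T \<Longrightarrow> braket (\<psi> i) A (\<psi> j) = 0"
    using h2 by blast
  from fe have FT: "\<And>i j. i < m \<Longrightarrow> j < m \<Longrightarrow> F i j \<in> T"
    and Fc: "\<And>i j. i < m \<Longrightarrow> j < m \<Longrightarrow> F i j \<in> carrier_mat N N"
    and Fs: "mat N N (\<lambda>(a,b). \<Sum>i<m. F i i $$ (a,b)) = 1\<^sub>m N"
    unfolding feas_def by auto
  from fe obtain f g where B: "block_mat m N F = mat (m*N) (m*N) (\<lambda>(i,j). \<Sum>u<r. f i u * g u j)"
    unfolding feas_def by auto
  have "\<forall>i. \<exists>a. i < l \<longrightarrow> a < m \<and> braket (\<psi> i) (F a a) (\<psi> i) \<noteq> 0"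
  proof
    fix i show "\<exists>a. i < l \<longrightarrow> a < m \<and> braket (\<psi> i) (F a a) (\<psi> i) \<noteq> 0"
    proof (cases "i < l")
      case True
      have "(\<Sum>a<m. braket (\<psi> i) (F a a) (\<psi> i)) = braket (\<psi> i) (1\<^sub>m N) (\<psi> i)"
        using braket_sum[OF \<psi>c[OF True] \<psi>c[OF True], of m "\<lambda>a. F a a"] Fc Fs by auto
      also have "\<dots> = \<psi> i \<bullet>c \<psi> i" unfolding braket_def using \<psi>c[OF True] by simp
      also have "\<dots> \<noteq> 0" using \<psi>c[OF True] \<psi>0[OF True] by simp
      finally have "\<exists>a<m. braket (\<psi> i) (F a a) (\<psi> i) \<noteq> 0"
        by (metis (mono_tags, lifting) lessThan_iff sum.neutral)
      then show ?thesis by blast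
    qed auto
  qed
  then obtain \<alpha> where \<alpha>m: "\<And>i. i < l \<Longrightarrow> \<alpha> i < m"
    and \<alpha>0: "\<And>i. i < l \<Longrightarrow> braket (\<psi> i) (F (\<alpha> i) (\<alpha> i)) (\<psi> i) \<noteq> 0"
    by metis
  define D where "D = mat l l (\<lambda>(i,j). braket (\<psi> i) (F (\<alpha> i) (\<alpha> j)) (\<psi> j))"
  have Ddec: "D = mat l l (\<lambda>(i,j). \<Sum>w<r. (\<Sum>x<N. cnj (\<psi> i $ x) * f (\<alpha> i * N + x) w) *
                 (\<Sum>y<N. g w (\<alpha> j * N + y) * \<psi> j $ y))"
  proof (rule eq_matI)
    fix i j assume "i < dim_row (mat l l (\<lambda>(i,j). \<Sum>w<r. (\<Sum>x<N. cnj (\<psi> i $ x) * f (\<alpha> i * N + x) w) *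
                 (\<Sum>y<N. g w (\<alpha> j * N + y) * \<psi> j $ y)))"
      "j < dim_col (mat l l (\<lambda>(i,j). \<Sum>w<r. (\<Sum>x<N. cnj (\<psi> i $ x) * f (\<alpha> i * N + x) w) *
                 (\<Sum>y<N. g w (\<alpha> j * N + y) * \<psi> j $ y)))"
    then have i: "i < l" and j: "j < l" by auto
    have ent: "F (\<alpha> i) (\<alpha> j) $$ (x,y) = (\<Sum>w<r. f (\<alpha> i * N + x) w * g w (\<alpha> j * N + y))"
      if x: "x < N" and y: "y < N" for x y
    proof -
      have r1: "\<alpha> i * N + x < m * N" using idx_bound[OF \<alpha>m[OF i] x] .
      have r2: "\<alpha> j * N + y < m * N" using idx_bound[OF \<alpha>m[OF j] y] .
      have "block_mat m N F $$ (\<alpha> i * N + x, \<alpha> j * N + y) = F (\<alpha> i) (\<alpha> j) $$ (x,y)"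
        unfolding block_mat_def using r1 r2 x y by simp
      then show ?thesis using B r1 r2 by simp
    qed
    have "D $$ (i,j) = (\<Sum>x<N. \<Sum>y<N. cnj (\<psi> i $ x) * F (\<alpha> i) (\<alpha> j) $$ (x,y) * \<psi> j $ y)"
      unfolding D_def using i j braket_expand[OF \<psi>c[OF i] \<psi>c[OF j] Fc[OF \<alpha>m[OF i] \<alpha>m[OF j]]] by simp
    also have "\<dots> = (\<Sum>x<N. \<Sum>y<N. cnj (\<psi> i $ x) * (\<Sum>w<r. f (\<alpha> i * N + x) w * g w (\<alpha> j * N + y)) * \<psi> j $ y)"
      by (intro sum.cong refl) (simp add: ent)
    also have "\<dots> = (\<Sum>w<r. (\<Sum>x<N. cnj (\<psi> i $ x) * f (\<alpha> i * N + x) w) *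
                 (\<Sum>y<N. g w (\<alpha> j * N + y) * \<psi> j $ y))"
      by (rule triple_swap)
    finally show "D $$ (i,j) = mat l l (\<lambda>(i,j). \<Sum>w<r. (\<Sum>x<N. cnj (\<psi> i $ x) * f (\<alpha> i * N + x) w) *
                 (\<Sum>y<N. g w (\<alpha> j * N + y) * \<psi> j $ y)) $$ (i,j)" using i j by simp
  qed (auto simp: D_def)
  have Dc: "D \<in> carrier_mat l l" unfolding D_def by simp
  have ut: "upper_triangular D"
    unfolding upper_triangular_def D_def
    using orth FT \<alpha>m by auto
  have "det D = prod_list (diag_mat D)" using det_upper_triangular[OF ut Dc] .
  also have "\<dots> = (\<Prod>i = 0..<l. D $$ (i,i))" using Dc by (simp add: prod_list_diag_prod)
  also have "\<dots> \<noteq> 0" using \<alpha>0 unfolding D_def by (simp add: prod_zero_iff)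
  finally have "det D \<noteq> 0" .
  then have "vec_space.rank l D = l" using vec_space.det_rank_iff[OF Dc] by simp
  moreover have "vec_space.rank l D \<le> r" unfolding Ddec by (rule rank_outer_sum)
  ultimately show "l \<le> r" by simp
qed

lemma iset_bdd: "feas N T m F r \<Longrightarrow> bdd_above (iset N T)"
  using alpha_elem_le by (meson bdd_aboveI)

lemma alpha_le: "feas N T m F r \<Longrightarrow> indep_number N T \<le> r"
  unfolding indep_iset using alpha_elem_le iset_ne by (metis cSup_least empty_iff)



lemma kron_carrier: "A \<in> carrier_mat p p' \<Longrightarrow> B \<in> carrier_mat q q' \<Longrightarrow> kron A B \<in> carrier_mat (p*q) (p'*q')"
  unfolding kron_def by auto

lemma kron_index: "A \<in> carrier_mat p p' \<Longrightarrow> B \<in> carrier_mat q q' \<Longrightarrow> i < p*q \<Longrightarrow> j < p'*q' \<Longrightarrow>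
   kron A B $$ (i,j) = A $$ (i div q, j div q') * B $$ (i mod q, j mod q')"
  unfolding kron_def by auto

lemma idx_facts:
  fixes R m1 m2 N1 n :: nat
  assumes "R < m1*m2*(N1*n)"
  shows "R div (N1*n) div m2 < m1" "R div (N1*n) mod m2 < m2" "R mod (N1*n) div n < N1"
    "R mod (N1*n) mod n < n" "0 < n" "0 < m2" "0 < N1"
proof -
  show n0: "0 < n" "0 < m2" "0 < N1" using assms by (auto intro!: Nat.gr0I)
  have d: "R div (N1*n) < m1*m2" using assms by (simp add: less_mult_imp_div_less)
  show "R div (N1*n) div m2 < m1" using d by (simp add: less_mult_imp_div_less)
  show "R div (N1*n) mod m2 < m2" using n0 by simp
  have e: "R mod (N1*n) < N1*n" using n0 by simp
  show "R mod (N1*n) div n < N1" using e by (simp add: less_mult_imp_div_less)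
  show "R mod (N1*n) mod n < n" using n0 by simp
qed

lemma feas_prod:
  assumes f1: "feas N1 T1 m1 F1 r1" and f2: "feas n S m2 F2 r2"
  shows "feas (N1*n) (tensor_sp N1 T1 n S) (m1*m2)
     (\<lambda>i j. kron (F1 (i div m2) (j div m2)) (F2 (i mod m2) (j mod m2))) (r1*r2)"
proof -
  from f1 have FT1: "\<And>i j. i < m1 \<Longrightarrow> j < m1 \<Longrightarrow> F1 i j \<in> T1"
    and Fc1: "\<And>i j. i < m1 \<Longrightarrow> j < m1 \<Longrightarrow> F1 i j \<in> carrier_mat N1 N1"
    and Fs1: "mat N1 N1 (\<lambda>(a,b). \<Sum>i<m1. F1 i i $$ (a,b)) = 1\<^sub>m N1"
    unfolding feas_def by auto
  from f1 obtain f1 g1 where B1: "block_mat m1 N1 F1 = mat (m1*N1) (m1*N1) (\<lambda>(i,j). \<Sum>u<r1. f1 i u * g1 u j)"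
    unfolding feas_def by auto
  from f2 have FT2: "\<And>i j. i < m2 \<Longrightarrow> j < m2 \<Longrightarrow> F2 i j \<in> S"
    and Fc2: "\<And>i j. i < m2 \<Longrightarrow> j < m2 \<Longrightarrow> F2 i j \<in> carrier_mat n n"
    and Fs2: "mat n n (\<lambda>(a,b). \<Sum>i<m2. F2 i i $$ (a,b)) = 1\<^sub>m n"
    unfolding feas_def by auto
  from f2 obtain f2 g2 where B2: "block_mat m2 n F2 = mat (m2*n) (m2*n) (\<lambda>(i,j). \<Sum>u<r2. f2 i u * g2 u j)"
    unfolding feas_def by auto
  define F where "F = (\<lambda>i j. kron (F1 (i div m2) (j div m2)) (F2 (i mod m2) (j mod m2)))"
  have dm: "i div m2 < m1" "i mod m2 < m2" if "i < m1*m2" for i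
  proof -
    show "i div m2 < m1" using that by (simp add: less_mult_imp_div_less)
    have "m2 > 0" using that by (auto intro!: Nat.gr0I)
    then show "i mod m2 < m2" by simp
  qed
  have part1: "\<forall>i<m1*m2. \<forall>j<m1*m2. F i j \<in> tensor_sp N1 T1 n S \<and> F i j \<in> carrier_mat (N1*n) (N1*n)"
  proof (intro allI impI)
    fix i j assume i: "i < m1*m2" and j: "j < m1*m2"
    have c: "F i j \<in> carrier_mat (N1*n) (N1*n)" unfolding F_def
      by (rule kron_carrier[OF Fc1 Fc2]) (use dm i j in auto)
    have "F i j \<in> {kron A B | A B. A \<in> T1 \<and> B \<in> S}" unfolding F_def
      using FT1 FT2 dm i j by blast
    moreover have "F i j = mat (N1*n) (N1*n) (\<lambda>(a,b). \<Sum>t<(1::nat). (\<lambda>_. 1) t * (\<lambda>_. F i j) t $$ (a,b))"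
      by (rule eq_matI) (use c in \<open>auto simp: lessThan_Suc\<close>)
    ultimately have "F i j \<in> tensor_sp N1 T1 n S" unfolding tensor_sp_def mat_span_def
      by (intro CollectI exI[of _ "1::nat"] exI[of _ "\<lambda>_. 1"] exI[of _ "\<lambda>_. F i j"]) auto
    then show "F i j \<in> tensor_sp N1 T1 n S \<and> F i j \<in> carrier_mat (N1*n) (N1*n)" using c by blast
  qed
  have part2: "mat (N1*n) (N1*n) (\<lambda>(a,b). \<Sum>i<m1*m2. F i i $$ (a,b)) = 1\<^sub>m (N1*n)"
  proof (rule eq_matI)
    fix a b assume "a < dim_row (1\<^sub>m (N1 * n))" "b < dim_col (1\<^sub>m (N1 * n))"
    then have a: "a < N1*n" and b: "b < N1*n" by auto
    have n0: "0 < n" using a by (auto intro!: Nat.gr0I)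
    have ad: "a div n < N1" "b div n < N1" using a b by (simp_all add: less_mult_imp_div_less)
    have am: "a mod n < n" "b mod n < n" using n0 by simp_all
    have "(\<Sum>i<m1*m2. F i i $$ (a,b)) =
        (\<Sum>i<m1*m2. F1 (i div m2) (i div m2) $$ (a div n, b div n) * F2 (i mod m2) (i mod m2) $$ (a mod n, b mod n))"
      unfolding F_def by (intro sum.cong refl kron_index[OF Fc1 Fc2]) (use dm a b in auto)
    also have "\<dots> = (\<Sum>p<m1. \<Sum>q<m2. F1 p p $$ (a div n, b div n) * F2 q q $$ (a mod n, b mod n))"
      by (rule sum_div_mod)
    also have "\<dots> = (\<Sum>p<m1. F1 p p $$ (a div n, b div n)) * (\<Sum>q<m2. F2 q q $$ (a mod n, b mod n))"
      by (simp add: sum_product)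
    also have "(\<Sum>p<m1. F1 p p $$ (a div n, b div n)) = 1\<^sub>m N1 $$ (a div n, b div n)"
      using arg_cong[OF Fs1, of "\<lambda>M. M $$ (a div n, b div n)"] ad by simp
    also have "(\<Sum>q<m2. F2 q q $$ (a mod n, b mod n)) = 1\<^sub>m n $$ (a mod n, b mod n)"
      using arg_cong[OF Fs2, of "\<lambda>M. M $$ (a mod n, b mod n)"] am by simp
    also have "1\<^sub>m N1 $$ (a div n, b div n) * 1\<^sub>m n $$ (a mod n, b mod n) = (1\<^sub>m (N1*n) $$ (a,b) :: complex)"
      using ad am a b by simp (metis div_mult_mod_eq)
    finally show "mat (N1*n) (N1*n) (\<lambda>(a,b). \<Sum>i<m1*m2. F i i $$ (a,b)) $$ (a,b) = 1\<^sub>m (N1*n) $$ (a,b)"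
      using a b by simp
  qed (auto)
  define \<rho>1 where "\<rho>1 = (\<lambda>R. (R div (N1*n) div m2) * N1 + (R mod (N1*n) div n))"
  define \<rho>2 where "\<rho>2 = (\<lambda>R. (R div (N1*n) mod m2) * n + (R mod (N1*n) mod n))"
  define f where "f = (\<lambda>R w. f1 (\<rho>1 R) (w div r2) * f2 (\<rho>2 R) (w mod r2))"
  define g where "g = (\<lambda>w C. g1 (w div r2) (\<rho>1 C) * g2 (w mod r2) (\<rho>2 C))"
  have part3: "block_mat (m1*m2) (N1*n) F = mat (m1*m2*(N1*n)) (m1*m2*(N1*n)) (\<lambda>(i,j). \<Sum>u<r1*r2. f i u * g u j)"
  proof (rule eq_matI)
    fix R C assume "R < dim_row (mat (m1*m2*(N1*n)) (m1*m2*(N1*n)) (\<lambda>(i,j). \<Sum>u<r1*r2. f i u * g u j))"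
      "C < dim_col (mat (m1*m2*(N1*n)) (m1*m2*(N1*n)) (\<lambda>(i,j). \<Sum>u<r1*r2. f i u * g u j))"
    then have R: "R < m1*m2*(N1*n)" and C: "C < m1*m2*(N1*n)" by auto
    note iR = idx_facts[OF R] and iC = idx_facts[OF C]
    have r1R: "\<rho>1 R < m1*N1" "\<rho>1 C < m1*N1" unfolding \<rho>1_def using iR iC idx_bound by auto
    have r2R: "\<rho>2 R < m2*n" "\<rho>2 C < m2*n" unfolding \<rho>2_def using iR iC idx_bound by auto
    have e1: "block_mat m1 N1 F1 $$ (\<rho>1 R, \<rho>1 C) =
       F1 (R div (N1*n) div m2) (C div (N1*n) div m2) $$ (R mod (N1*n) div n, C mod (N1*n) div n)"
      unfolding block_mat_def using r1R iR iC by (simp add: \<rho>1_def)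
    have e2: "block_mat m2 n F2 $$ (\<rho>2 R, \<rho>2 C) =
       F2 (R div (N1*n) mod m2) (C div (N1*n) mod m2) $$ (R mod (N1*n) mod n, C mod (N1*n) mod n)"
      unfolding block_mat_def using r2R iR iC by (simp add: \<rho>2_def)
    have "block_mat (m1*m2) (N1*n) F $$ (R,C) = F (R div (N1*n)) (C div (N1*n)) $$ (R mod (N1*n), C mod (N1*n))"
      unfolding block_mat_def using R C by simp
    also have "\<dots> = F1 (R div (N1*n) div m2) (C div (N1*n) div m2) $$ (R mod (N1*n) div n, C mod (N1*n) div n) *
        F2 (R div (N1*n) mod m2) (C div (N1*n) mod m2) $$ (R mod (N1*n) mod n, C mod (N1*n) mod n)"
      unfolding F_def by (rule kron_index[OF Fc1 Fc2]) (use iR iC in auto)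
    also have "\<dots> = (\<Sum>u<r1. f1 (\<rho>1 R) u * g1 u (\<rho>1 C)) * (\<Sum>v<r2. f2 (\<rho>2 R) v * g2 v (\<rho>2 C))"
      unfolding e1[symmetric] e2[symmetric] B1 B2 using r1R r2R by simp
    also have "\<dots> = (\<Sum>u<r1. \<Sum>v<r2. f1 (\<rho>1 R) u * f2 (\<rho>2 R) v * (g1 u (\<rho>1 C) * g2 v (\<rho>2 C)))"
      by (simp add: sum_product mult_ac)
    also have "\<dots> = (\<Sum>w<r1*r2. f R w * g w C)"
      unfolding f_def g_def by (rule sum_div_mod[symmetric])
    finally show "block_mat (m1*m2) (N1*n) F $$ (R,C) = mat (m1*m2*(N1*n)) (m1*m2*(N1*n)) (\<lambda>(i,j). \<Sum>u<r1*r2. f i u * g u j) $$ (R,C)"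
      using R C by simp
  qed (auto simp: block_mat_def)
  show ?thesis unfolding feas_def F_def[symmetric] using part1 part2 part3 by blast
qed



lemma feas_base: "feas 1 (tpow n S 0) 1 (\<lambda>_ _. 1\<^sub>m 1) 1"
proof -
  have "(1\<^sub>m 1 :: complex mat) = mat 1 1 (\<lambda>(a,b). \<Sum>t<(1::nat). (\<lambda>_. 1) t * (\<lambda>_. 1\<^sub>m 1) t $$ (a,b))"
    by (rule eq_matI) auto
  then have m: "(1\<^sub>m 1 :: complex mat) \<in> tpow n S 0" unfolding tpow.simps mat_span_def
    by (intro CollectI exI[of _ "1::nat"] exI[of _ "\<lambda>_. 1"] exI[of _ "\<lambda>_. 1\<^sub>m 1"]) auto
  have s: "mat 1 1 (\<lambda>(a,b). \<Sum>i<(1::nat). (1\<^sub>m 1 :: complex mat) $$ (a,b)) = 1\<^sub>m 1"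
    by (rule eq_matI) auto
  have b: "\<exists>f g. block_mat 1 1 (\<lambda>_ _. 1\<^sub>m 1) = mat (1*1) (1*1) (\<lambda>(i,j). \<Sum>u<(1::nat). f i u * g u j :: complex)"
    by (rule exI[of _ "\<lambda>_ _. 1"], rule exI[of _ "\<lambda>_ _. 1"]) (unfold block_mat_def, rule eq_matI, auto)
  have c: "(1\<^sub>m 1 :: complex mat) \<in> carrier_mat 1 1" by simp
  show ?thesis unfolding feas_def using m s b c by blast
qed

lemma tpow_feas:
  assumes f: "feas n S m0 F0 r"
  shows "\<exists>m F. feas (n^k) (tpow n S k) m F (r^k)"
proof (induction k)
  case 0 show ?case using feas_base by fastforce
next
  case (Suc k)
  then obtain m F where "feas (n^k) (tpow n S k) m F (r^k)" by blast
  from feas_prod[OF this f] have "feas (n^k*n) (tensor_sp (n^k) (tpow n S k) n S) (m*m0)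
     (\<lambda>i j. kron (F (i div m0) (j div m0)) (F0 (i mod m0) (j mod m0))) (r^k*r)" .
  then have "feas (n^Suc k) (tpow n S (Suc k)) (m*m0)
     (\<lambda>i j. kron (F (i div m0) (j div m0)) (F0 (i mod m0) (j mod m0))) (r^Suc k)"
    by (simp only: tpow.simps power_Suc2)
  then show ?case by blast
qed

lemma tpow1_sub:
  assumes S: "nc_graph n S"
  shows "tpow n S 1 \<subseteq> S"
proof
  have sub: "subspace_mat n S" using S unfolding nc_graph_def by auto
  have Sc: "S \<subseteq> carrier_mat n n" using sub unfolding subspace_mat_def by auto
  fix M assume "M \<in> tpow n S 1"
  then have "M \<in> mat_span (1*n) (1*n) {kron A B | A B. A \<in> mat_span 1 1 {1\<^sub>m 1} \<and> B \<in> S}"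
    by (simp only: One_nat_def tpow.simps tensor_sp_def power_0)
  then have "\<exists>(m::nat) coef G. (\<forall>i<m. G i \<in> {kron A B | A B. A \<in> mat_span 1 1 {1\<^sub>m 1} \<and> B \<in> S}) \<and>
     M = mat (1*n) (1*n) (\<lambda>(a,b). \<Sum>i<m. coef i * G i $$ (a,b))"
    by (simp only: mat_span_def mem_Collect_eq)
  then obtain m :: nat and coef G where G: "\<forall>i<m. G i \<in> {kron A B | A B. A \<in> mat_span 1 1 {1\<^sub>m 1} \<and> B \<in> S}"
    and M: "M = mat (1*n) (1*n) (\<lambda>(a,b). \<Sum>i<m. coef i * G i $$ (a,b))"
    by blast
  have ex: "\<exists>p. G i = kron (fst p) (snd p) \<and> fst p \<in> mat_span 1 1 {1\<^sub>m 1} \<and> snd p \<in> S" if "i < m" for i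
    using G that by force
  define A where "A = (\<lambda>i. fst (SOME p. G i = kron (fst p) (snd p) \<and> fst p \<in> mat_span 1 1 {1\<^sub>m 1} \<and> snd p \<in> S))"
  define B where "B = (\<lambda>i. snd (SOME p. G i = kron (fst p) (snd p) \<and> fst p \<in> mat_span 1 1 {1\<^sub>m 1} \<and> snd p \<in> S))"
  have AB: "G i = kron (A i) (B i) \<and> A i \<in> mat_span 1 1 {1\<^sub>m 1} \<and> B i \<in> S" if "i < m" for i
    unfolding A_def B_def using someI_ex[OF ex[OF that]] .
  have Ac: "A i \<in> carrier_mat 1 1" if "i < m" for i
    using AB[OF that] unfolding mat_span_def by auto
  have "M = mat n n (\<lambda>(a,b). \<Sum>i<m. (coef i * A i $$ (0,0)) * B i $$ (a,b))"
  proof (rule eq_matI)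
    fix a b assume "a < dim_row (mat n n (\<lambda>(a,b). \<Sum>i<m. (coef i * A i $$ (0,0)) * B i $$ (a,b)))"
       "b < dim_col (mat n n (\<lambda>(a,b). \<Sum>i<m. (coef i * A i $$ (0,0)) * B i $$ (a,b)))"
    then have a: "a < n" and b: "b < n" by auto
    have "M $$ (a,b) = (\<Sum>i<m. coef i * G i $$ (a,b))" using M a b by simp
    also have "\<dots> = (\<Sum>i<m. (coef i * A i $$ (0,0)) * B i $$ (a,b))"
    proof (rule sum.cong[OF refl])
      fix i assume "i \<in> {..<m}"
      then have i: "i < m" by simp
      have "G i $$ (a,b) = A i $$ (a div n, b div n) * B i $$ (a mod n, b mod n)"
        using AB[OF i] kron_index[OF Ac[OF i], of "B i" n n a b] Sc a b by auto
      also have "\<dots> = A i $$ (0,0) * B i $$ (a,b)" using a b by simp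
      finally show "coef i * G i $$ (a,b) = (coef i * A i $$ (0,0)) * B i $$ (a,b)" by simp
    qed
    finally show "M $$ (a,b) = mat n n (\<lambda>(a,b). \<Sum>i<m. (coef i * A i $$ (0,0)) * B i $$ (a,b)) $$ (a,b)"
      using a b by simp
  qed (use M in auto)
  also have "\<dots> \<in> S" by (rule span_closed[OF sub]) (use AB in auto)
  finally show "M \<in> S" .
qed

lemma adj_facts:
  assumes E: "E \<in> carrier_mat k n"
  shows "mat_adjoint E \<in> carrier_mat n k" "\<And>i j. i < n \<Longrightarrow> j < k \<Longrightarrow> mat_adjoint E $$ (i,j) = cnj (E $$ (j,i))"
  using E unfolding mat_adjoint_def by (auto simp: mat_of_rows_def)

lemma adj_one: "mat_adjoint (1\<^sub>m n :: complex mat) = 1\<^sub>m n"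
proof -
  have c: "mat_adjoint (1\<^sub>m n :: complex mat) \<in> carrier_mat n n" by (rule adj_facts(1)) simp
  show ?thesis by (rule eq_matI) (use c adj_facts(2)[of "1\<^sub>m n" n n] in auto)
qed



lemma haemers_feas:
  assumes S: "nc_graph n S"
  shows "\<exists>m F. feas n S m F (haemers n S)"
proof -
  have sub: "subspace_mat n S" and I: "1\<^sub>m n \<in> S" using S unfolding nc_graph_def by auto
  have Sc: "S \<subseteq> carrier_mat n n" using sub unfolding subspace_mat_def by auto
  let ?HS = "{mat_rank (block_mat m n F) | m F.
      (\<forall>i<m. \<forall>j<m. F i j \<in> S) \<and>
      mat n n (\<lambda>(a,b). \<Sum>i<m. F i i $$ (a,b)) = 1\<^sub>m n}"
  have "mat n n (\<lambda>(a,b). \<Sum>i<(1::nat). (1\<^sub>m n :: complex mat) $$ (a,b)) = 1\<^sub>m n"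
    by (rule eq_matI) auto
  then have "mat_rank (block_mat 1 n (\<lambda>_ _. 1\<^sub>m n)) \<in> ?HS" using I by blast
  then have ne: "?HS \<noteq> {}" by blast
  have "haemers n S \<in> ?HS" unfolding haemers_def using Inf_nat_def1[OF ne] .
  then obtain m :: nat and F where FS: "\<forall>i<m. \<forall>j<m. F i j \<in> S"
    and Fs: "mat n n (\<lambda>(a,b). \<Sum>i<m. F i i $$ (a,b)) = 1\<^sub>m n"
    and H: "haemers n S = mat_rank (block_mat m n F)" by blast
  have Bc: "block_mat m n F \<in> carrier_mat (m*n) (m*n)" unfolding block_mat_def by simp
  have "mat_rank (block_mat m n F) = vec_space.rank (m*n) (block_mat m n F)"
    unfolding mat_rank_def using Bc by simp
  then have r: "vec_space.rank (m*n) (block_mat m n F) = haemers n S" using H by simp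
  have "\<exists>f g. block_mat m n F = mat (m*n) (m*n) (\<lambda>(i,j). \<Sum>u<haemers n S. f i u * g u j)"
    using rank_decomp[OF Bc] unfolding r .
  moreover have "\<forall>i<m. \<forall>j<m. F i j \<in> S \<and> F i j \<in> carrier_mat n n" using FS Sc by blast
  ultimately have "feas n S m F (haemers n S)" unfolding feas_def using Fs by blast
  then show ?thesis by blast
qed

lemma haemers_le_orth:
  assumes S: "nc_graph n S"
  shows "haemers n S \<le> orth_rank n S"
proof -
  have sub: "subspace_mat n S" and I: "1\<^sub>m n \<in> S" using S unfolding nc_graph_def by auto
  have Sc: "S \<subseteq> carrier_mat n n" using sub unfolding subspace_mat_def by auto
  let ?K = "{k. \<exists>m E. kraus_channel n k m E \<and> channel_graph n m E \<subseteq> S}"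
  have "n \<in> ?K"
  proof -
    have kc: "kraus_channel n n 1 (\<lambda>_. 1\<^sub>m n)" unfolding kraus_channel_def adj_one
      by (auto intro!: eq_matI)
    have "channel_graph n 1 (\<lambda>_. 1\<^sub>m n) \<subseteq> S"
    proof
      fix M assume "M \<in> channel_graph n 1 (\<lambda>_. 1\<^sub>m n)"
      then obtain m :: nat and coef G where G: "\<forall>i<m. G i \<in> {mat_adjoint (1\<^sub>m n) * 1\<^sub>m n | i j. i < (1::nat) \<and> j < (1::nat)}"
        and M: "M = mat n n (\<lambda>(a,b). \<Sum>i<m. coef i * G i $$ (a,b))"
        unfolding channel_graph_def mat_span_def by blast
      have "\<forall>i<m. G i \<in> S" using G I by (auto simp: adj_one)
      then show "M \<in> S" unfolding M by (rule span_closed[OF sub])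
    qed
    then show ?thesis using kc by blast
  qed
  then have ne: "?K \<noteq> {}" by blast
  show ?thesis unfolding orth_rank_def
  proof (rule cInf_greatest[OF ne])
    fix k assume "k \<in> ?K"
    then obtain m E where kc: "kraus_channel n k m E" and cg: "channel_graph n m E \<subseteq> S" by blast
    have Ec: "\<And>i. i < m \<Longrightarrow> E i \<in> carrier_mat k n" using kc unfolding kraus_channel_def by auto
    have Es: "mat n n (\<lambda>(a,b). \<Sum>i<m. (mat_adjoint (E i) * E i) $$ (a,b)) = 1\<^sub>m n"
      using kc unfolding kraus_channel_def by auto
    define F where "F = (\<lambda>i j. mat_adjoint (E i) * E j)"
    have Fc: "F i j \<in> carrier_mat n n" if "i < m" "j < m" for i j
      unfolding F_def using adj_facts(1)[OF Ec[OF that(1)]] Ec[OF that(2)] by auto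
    have FS: "\<forall>i<m. \<forall>j<m. F i j \<in> S"
    proof (intro allI impI)
      fix i j assume i: "i < m" and j: "j < m"
      have "F i j = mat n n (\<lambda>(a,b). \<Sum>t<(1::nat). (\<lambda>_. 1) t * (\<lambda>_. F i j) t $$ (a,b))"
        by (rule eq_matI) (use Fc[OF i j] in auto)
      moreover have "F i j \<in> {mat_adjoint (E i) * E j | i j. i < m \<and> j < m}" unfolding F_def using i j by blast
      ultimately have "F i j \<in> channel_graph n m E" unfolding channel_graph_def mat_span_def
        by (intro CollectI exI[of _ "1::nat"] exI[of _ "\<lambda>_. 1"] exI[of _ "\<lambda>_. F i j"]) auto
      then show "F i j \<in> S" using cg by blast
    qed
    have Bc: "block_mat m n F \<in> carrier_mat (m*n) (m*n)" unfolding block_mat_def by simp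
    have Bd: "block_mat m n F = mat (m*n) (m*n) (\<lambda>(R,C). \<Sum>u<k. cnj (E (R div n) $$ (u, R mod n)) * E (C div n) $$ (u, C mod n))"
    proof (rule eq_matI)
      fix R C assume "R < dim_row (mat (m*n) (m*n) (\<lambda>(R,C). \<Sum>u<k. cnj (E (R div n) $$ (u, R mod n)) * E (C div n) $$ (u, C mod n)))"
        "C < dim_col (mat (m*n) (m*n) (\<lambda>(R,C). \<Sum>u<k. cnj (E (R div n) $$ (u, R mod n)) * E (C div n) $$ (u, C mod n)))"
      then have R: "R < m*n" and C: "C < m*n" by auto
      have n0: "0 < n" using R by (auto intro!: Nat.gr0I)
      have d: "R div n < m" "C div n < m" using R C by (simp_all add: less_mult_imp_div_less mult.commute)
      have md: "R mod n < n" "C mod n < n" using n0 by simp_all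
      have "block_mat m n F $$ (R,C) = F (R div n) (C div n) $$ (R mod n, C mod n)"
        unfolding block_mat_def using R C by simp
      also have "\<dots> = (\<Sum>u<k. mat_adjoint (E (R div n)) $$ (R mod n, u) * E (C div n) $$ (u, C mod n))"
        unfolding F_def using adj_facts(1)[OF Ec[OF d(1)]] Ec[OF d(2)] md
        by (simp add: scalar_prod_def atLeast0LessThan)
      also have "\<dots> = (\<Sum>u<k. cnj (E (R div n) $$ (u, R mod n)) * E (C div n) $$ (u, C mod n))"
        using adj_facts(2)[OF Ec[OF d(1)]] md by simp
      finally show "block_mat m n F $$ (R,C) = mat (m*n) (m*n) (\<lambda>(R,C). \<Sum>u<k. cnj (E (R div n) $$ (u, R mod n)) * E (C div n) $$ (u, C mod n)) $$ (R,C)"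
        using R C by simp
    qed (auto simp: block_mat_def)
    have "vec_space.rank (m*n) (block_mat m n F) \<le> k" unfolding Bd by (rule rank_outer_sum)
    then have rk: "mat_rank (block_mat m n F) \<le> k"
      unfolding mat_rank_def using Bc by simp
    have Fsum: "mat n n (\<lambda>(a,b). \<Sum>i<m. F i i $$ (a,b)) = 1\<^sub>m n" using Es unfolding F_def .
    have "haemers n S \<le> mat_rank (block_mat m n F)" unfolding haemers_def
      by (rule cInf_lower) (use FS Fsum in auto)
    then show "haemers n S \<le> k" using rk by simp
  qed
qed

theorem mainTheorem3:
  fixes n :: nat and S :: "complex mat set"
  assumes "nc_graph n S"
  shows "real (indep_number n S) \<le> shannon_capacity n S \<and>
         shannon_capacity n S \<le> real (haemers n S) \<and>
         haemers n S \<le> orth_rank n S"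
proof -
  let ?H = "haemers n S"
  obtain m0 F0 where f0: "feas n S m0 F0 ?H" using haemers_feas[OF assms] by blast
  have fk: "\<exists>m F. feas (n^k) (tpow n S k) m F (?H^k)" for k using tpow_feas[OF f0] .
  have ak: "indep_number (n^k) (tpow n S k) \<le> ?H^k" for k using fk[of k] alpha_le by blast
  have gk: "root k (real (indep_number (n^k) (tpow n S k))) \<le> real ?H" if k: "k \<in> {1..}" for k
  proof -
    have k0: "0 < k" using k by auto
    have "real (indep_number (n^k) (tpow n S k)) \<le> real (?H ^ k)" using ak[of k]
      by (simp only: of_nat_le_iff)
    then have "real (indep_number (n^k) (tpow n S k)) \<le> real ?H ^ k" by simp
    then have "root k (real (indep_number (n^k) (tpow n S k))) \<le> root k (real ?H ^ k)"
      using k0 by simp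
    also have "\<dots> = real ?H" using real_root_power_cancel[OF k0] by simp
    finally show ?thesis .
  qed
  have part2: "shannon_capacity n S \<le> real ?H"
    unfolding shannon_capacity_def by (rule cSUP_least) (use gk in auto)
  have bdd: "bdd_above ((\<lambda>k. root k (real (indep_number (n^k) (tpow n S k)))) ` {1..})"
    using gk by (meson bdd_aboveI2)
  obtain m1 F1 where f1: "feas (n^1) (tpow n S 1) m1 F1 (?H^1)" using fk[of 1] by blast
  have isub: "iset n S \<subseteq> iset (n^1) (tpow n S 1)"
  proof
    fix l assume "l \<in> iset n S"
    then obtain \<psi> where h1: "\<forall>i<l. \<psi> i \<in> carrier_vec n \<and> \<psi> i \<noteq> 0\<^sub>v n"
      and h2: "\<forall>i<l. \<forall>j<l. i \<noteq> j \<longrightarrow> (\<forall>A\<in>S. braket (\<psi> i) A (\<psi> j) = 0)"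
      unfolding iset_def by blast
    have h3: "\<forall>i<l. \<forall>j<l. i \<noteq> j \<longrightarrow> (\<forall>A\<in>tpow n S 1. braket (\<psi> i) A (\<psi> j) = 0)"
      using h2 tpow1_sub[OF assms] by blast
    show "l \<in> iset (n^1) (tpow n S 1)" unfolding iset_def power_one_right
      using h1 h3 by blast
  qed
  have "indep_number n S \<le> indep_number (n^1) (tpow n S 1)"
    unfolding indep_iset by (rule cSup_subset_mono[OF _ iset_bdd[OF f1] isub]) (use iset_ne in auto)
  then have "real (indep_number n S) \<le> root 1 (real (indep_number (n^1) (tpow n S 1)))"
    by simp
  also have "\<dots> \<le> shannon_capacity n S"
    unfolding shannon_capacity_def by (rule cSUP_upper[OF _ bdd]) simp
  finally have part1: "real (indep_number n S) \<le> shannon_capacity n S" .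
  show ?thesis using part1 part2 haemers_le_orth[OF assms] by blast
qed

end
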